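(* Let $q$ be a prime power and let $U(X), V(X) \in \mathbb{F}_q[X]$ with $\deg(V) < q$ and $i \geq 0$ an integer, such that $U(X) = V(X)\cdot \Lambda^i(X)$, where $\Lambda(X) = X^q - X$. Then for every integer $\ell$ with $0 \leq \ell < q$, $$U^{[\ell]}(X) \equiv (-1)^i \cdot V^{[\ell - i]}(X) \pmod{\Lambda(X)},$$ with the convention that $V^{[j]}(X) = 0$ for $j < 0$.
   Context: For a field $\mathbb{F}$ and $A(X) \in \mathbb{F}[X]$, the $\ell$-th Hasse derivative $A^{[\ell]}(X)$ is the coefficient of $Z^\ell$ in the expansion of $A(X+Z)$ as a polynomial in $Z$ with coefficients in $\mathbb{F}[X]$. *)

theory Defs
  imports "HOL-Computational_Algebra.Polynomial" "HOL-Library.Cardinality"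
begin

text \<open>The l-th Hasse derivative of A: the coefficient of Z^l in A(X+Z), where A(X+Z)
  is viewed as a polynomial in Z (outer variable) with coefficients in F[X] (inner variable).\<close>
definition hasse_deriv :: "'a::comm_ring_1 poly \<Rightarrow> nat \<Rightarrow> 'a poly" where
  "hasse_deriv A l = coeff (pcompose (map_poly (\<lambda>c. [:c:]) A) [:[:0, 1:], 1:]) l"

definition Lam :: "nat \<Rightarrow> 'a::comm_ring_1 poly" where
  "Lam q = monom 1 q - [:0, 1:]"

end

theory Submission
  imports Defs
begin

abbreviation cp :: "'a::comm_ring_1 poly \<Rightarrow> 'a poly poly" where
  "cp A \<equiv> map_poly (\<lambda>c. [:c:]) A"

lemma cp_add: "cp (p + q) = cp p + cp q"
  by (rule poly_eqI) (simp add: coeff_map_poly)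

lemma cp_diff: "cp (p - q) = cp p - cp q"
  by (rule poly_eqI) (simp add: coeff_map_poly)

lemma const_add: "[:a + b:] = [:a:] + [:b:]"
  by (simp add: add_pCons)

lemma const_sum: "[:sum f A:] = (\<Sum>x\<in>A. [:f x:])"
  by (induction A rule: infinite_finite_induct) (auto simp: const_add)

lemma cp_mult: "cp (p * q) = cp p * cp q"
  by (rule poly_eqI) (simp add: coeff_map_poly coeff_mult const_sum mult.commute)

lemma cp_power: "cp (p ^ n) = cp p ^ n"
  by (induction n) (simp_all add: cp_mult)

definition Hp :: "'a::comm_ring_1 poly \<Rightarrow> 'a poly poly" where
  "Hp A = pcompose (cp A) [:[:0, 1:], 1:]"

lemma Hp_mult: "Hp (p * q) = Hp p * Hp q"
  by (simp add: Hp_def cp_mult pcompose_mult)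

lemma Hp_diff: "Hp (p - q) = Hp p - Hp q"
  by (simp add: Hp_def cp_diff pcompose_diff)

lemma Hp_power: "Hp (p ^ n) = Hp p ^ n"
  by (induction n) (simp add: Hp_def pcompose_1, metis Hp_mult power_Suc)

lemma Hp_X: "Hp [:0, 1:] = [:[:0, 1:], 1:]"
  by (simp add: Hp_def map_poly_pCons pcompose_pCons)

lemma fermat_card:
  fixes x :: "'a::{finite,field}"
  shows "x ^ CARD('a) = x"
proof (cases "x = 0")
  case False
  have "x * (\<Prod>y\<in>UNIV-{0}. x * y) = x * x ^ (card (UNIV :: 'a set) - 1) * \<Prod>(UNIV-{0})"
    by (simp add: prod.distrib mult_ac)
  also have "x * x ^ (card (UNIV :: 'a set) - 1) = x ^ Suc (card (UNIV :: 'a set) - 1)"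
    by (subst power_Suc) auto
  also have "Suc (card (UNIV :: 'a set) - 1) = card (UNIV :: 'a set)"
    using finite_UNIV_card_ge_0[where ?'a = 'a] by simp
  also have "(\<Prod>y\<in>UNIV-{0}. x * y) = (\<Prod>y\<in>UNIV-{0}. y)"
    by (rule prod.reindex_bij_witness[of _ "\<lambda>y. y / x" "\<lambda>y. x * y"]) (use False in auto)
  finally show ?thesis
    by simp
qed (use finite_UNIV_card_ge_0[where ?'a = 'a] in auto)

lemma choose_card_zero:
  assumes "0 < j" "j < CARD('a::{finite,field})"
  shows "(of_nat (CARD('a) choose j) :: 'a) = 0"
proof -
  define q where "q = CARD('a)"
  define P :: "'a poly" where "P = [:1,1:] ^ q - monom 1 q - 1"
  have deg: "degree P \<le> q - 1"
  proof (rule degree_le, intro allI impI)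
    fix i assume i: "q - 1 < i"
    show "coeff P i = 0"
    proof (cases "i = q")
      case True
      then show ?thesis using coeff_linear_poly_power[of q q "1::'a" 1] assms
        by (simp add: P_def q_def)
    next
      case False
      then have "i > q" using i assms q_def by linarith
      moreover have "degree ([:1,1:] ^ q :: 'a poly) \<le> q"
        using degree_power_le[of "[:1,1::'a:]" q] by simp
      ultimately show ?thesis by (simp add: P_def coeff_eq_0)
    qed
  qed
  have roots: "{x. poly P x = 0} = UNIV"
  proof -
    have "poly P x = 0" for x
    proof -
      have "poly P x = (1 + x) ^ q - x ^ q - 1" by (simp add: P_def poly_monom)
      also have "\<dots> = 0" by (simp add: q_def fermat_card)
      finally show ?thesis .
    qed
    then show ?thesis by auto
  qed
  have "P = 0"
  proof (rule ccontr)
    assume "P \<noteq> 0"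
    from card_poly_roots_bound[OF this] roots deg assms show False by (simp add: q_def)
  qed
  then have "coeff P j = 0" by simp
  moreover have "coeff P j = of_nat (q choose j)"
    using coeff_linear_poly_power[of j q "1::'a" 1] assms by (simp add: P_def q_def)
  ultimately show ?thesis by (simp add: q_def)
qed

lemma linear_power_frob:
  fixes a :: "'b::comm_ring_1"
  assumes "q > 0" "\<And>j. 0 < j \<Longrightarrow> j < q \<Longrightarrow> (of_nat (q choose j) :: 'b) = 0"
  shows "[:a, 1:] ^ q = [:a ^ q:] + monom 1 q"
proof (rule poly_eqI)
  fix j
  show "coeff ([:a, 1:] ^ q) j = coeff ([:a ^ q:] + monom 1 q) j"
  proof (cases "j \<le> q")
    case True
    then have "coeff ([:a, 1:] ^ q) j = of_nat (q choose j) * a ^ (q - j)"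
      using coeff_linear_poly_power[of j q a 1] by simp
    then show ?thesis using True assms(1) assms(2)[of j]
      by (cases "j = 0"; cases "j = q") (auto simp: coeff_monom coeff_pCons split: nat.splits)
  next
    case False
    have "degree ([:a, 1:] ^ q) \<le> q"
      using degree_power_le[of "[:a, 1:]" q] by simp
    with False show ?thesis by (simp add: coeff_eq_0 coeff_monom coeff_pCons split: nat.splits)
  qed
qed

lemma Hp_Lam:
  "Hp (Lam CARD('a::{finite,field})) =
     [:Lam CARD('a):] + (monom 1 CARD('a) - [:0, 1:] :: 'a poly poly)"
proof -
  have m: "monom (1::'a) CARD('a) = [:0, 1:] ^ CARD('a)"
    by (simp add: monom_altdef)
  have "Hp (Lam CARD('a) :: 'a poly) = [:[:0, 1:], 1:] ^ CARD('a) - [:[:0, 1:], 1:]"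
    unfolding Lam_def m Hp_diff Hp_power Hp_X ..
  also have "[:[:0, 1::'a:], 1:] ^ CARD('a) = [:[:0, 1:] ^ CARD('a):] + monom 1 CARD('a)"
    by (rule linear_power_frob) (simp_all add: of_nat_poly choose_card_zero)
  finally show ?thesis
    by (simp add: Lam_def m)
qed

lemma W_power:
  fixes q :: nat
  shows "\<exists>R. (monom 1 q - [:0, 1:] :: 'b::comm_ring_1 poly) ^ i = monom ((-1) ^ i) i + monom 1 q * R"
proof (induction i)
  case 0
  show ?case by (intro exI[of _ 0]) (simp add: one_pCons monom_0)
next
  case (Suc i)
  then obtain R where R: "(monom 1 q - [:0, 1:] :: 'b poly) ^ i = monom ((-1) ^ i) i + monom 1 q * R" by blast
  have X: "[:0, 1:] = (monom 1 1 :: 'b poly)" by (simp add: monom_Suc monom_0)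
  have "(monom 1 q - [:0, 1:] :: 'b poly) ^ Suc i =
      (monom 1 q - monom 1 1) * (monom ((-1) ^ i) i + monom 1 q * R)"
    by (subst power_Suc, subst R, simp add: X)
  also have "\<dots> = monom ((-1) ^ Suc i) (Suc i) +
      monom 1 q * (monom ((-1) ^ i) i + monom 1 q * R - monom 1 1 * R)"
    by (simp add: algebra_simps mult_monom add_monom)
  finally show ?case by blast
qed

lemma CW_power:
  fixes C W :: "'b::comm_ring_1"
  shows "\<exists>S. (C + W) ^ i = W ^ i + C * S"
proof (induction i)
  case 0
  show ?case by (intro exI[of _ 0]) simp
next
  case (Suc i)
  then obtain S where S: "(C + W) ^ i = W ^ i + C * S" by blast
  have "(C + W) ^ Suc i = W ^ Suc i + C * (W ^ i + (C + W) * S)"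
    by (simp add: S algebra_simps)
  then show ?case by blast
qed

lemma neg1_pow_smult: "(-1::'b::comm_ring_1 poly) ^ i * p = smult ((-1) ^ i) p"
  by (cases "even i") simp_all

lemma hasse_Hp: "hasse_deriv A l = coeff (Hp A) l"
  by (simp add: hasse_deriv_def Hp_def)

theorem lemma2p4:
  fixes U V :: "'a::{finite, field} poly" and i l :: nat
  assumes "degree V < CARD('a)"
    and "U = V * Lam (CARD('a)) ^ i"
    and "l < CARD('a)"
  shows "hasse_deriv U l mod Lam (CARD('a)) =
         smult ((-1) ^ i) (if i \<le> l then hasse_deriv V (l - i) else 0) mod Lam (CARD('a))"
proof -
  define q where "q = CARD('a)"
  define L :: "'a poly" where "L = Lam q"
  define W :: "'a poly poly" where "W = monom 1 q - [:0, 1:]"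
  obtain S where S: "([:L:] + W) ^ i = W ^ i + [:L:] * S"
    using CW_power by blast
  obtain R where R: "W ^ i = monom ((-1) ^ i) i + monom 1 q * R"
    unfolding W_def using W_power by blast
  have "Hp U = Hp V * ([:L:] + W) ^ i"
    using assms(2) Hp_Lam[where 'a='a] by (simp add: Hp_mult Hp_power L_def W_def q_def)
  also have "\<dots> = Hp V * monom ((-1) ^ i) i + monom 1 q * (Hp V * R) + [:L:] * (Hp V * S)"
    by (subst S, subst R) (simp add: algebra_simps)
  finally have HU: "Hp U = Hp V * monom ((-1) ^ i) i + monom 1 q * (Hp V * R) + [:L:] * (Hp V * S)" .
  have c1: "coeff (Hp V * monom ((-1) ^ i) i) l = smult ((-1) ^ i) (if i \<le> l then coeff (Hp V) (l - i) else 0)"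
    by (subst mult.commute) (simp add: coeff_monom_mult neg1_pow_smult)
  have c2: "coeff (monom 1 q * (Hp V * R)) l = 0"
    using assms(3) by (simp add: coeff_monom_mult q_def)
  have c3: "coeff ([:L:] * (Hp V * S)) l = L * coeff (Hp V * S) l"
    by simp
  have "hasse_deriv U l = smult ((-1) ^ i) (if i \<le> l then hasse_deriv V (l - i) else 0) + L * coeff (Hp V * S) l"
    by (simp add: hasse_Hp HU c1 c2 c3 del: mult_pCons_left)
  then show ?thesis
    by (simp add: L_def q_def)
qed

end
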